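(* Under Assumption 1, for every $i\in M$ and admissible profile $a=(a_i,a_{-i})$: (1) for $j\ne i$, $D_{j,i}(a)$ depends only on $a_{-i}$; (2) $D_{i,i}(a)=\tilde a_{i,i}+\sum_{k\in M\setminus\{i\}}\tilde a_{k,i}D_{k,i}(a_{-i})<1$; (3) $$\pi_i(a)=\varepsilon_i\,\frac{a_{0,i}+\sum_{j\in M\setminus\{i\}}a_{0,j}D_{j,i}(a_{-i})}{1-\tilde a_{i,i}-\sum_{k\in M\setminus\{i\}}\tilde a_{k,i}D_{k,i}(a_{-i})};$$ (4) $\pi_i$ is continuous and quasi-concave in $a_i\in S_i(b)$.
   Context: Household $0$, firms $M$, $N=M\cup\{0\}$; sectors with $M_0=\{0\}$ (labor) and $M_\ell$ the firms of sector $\ell$. Consumption shares $a_0\in\mathbb{R}^M_{++}$ summing to $1$; firm $i$ has requirements $b_i\ge0$, $\sum_\ell b_{i,\ell}\le1$, $b_{i,0}>0$, and strategy set $S_i(b)=\{a_i\in\mathbb{R}^N_+:\sum_{j\in M_\ell}a_{i,j}=b_{i,\ell}\ \forall\ell\}$; $\varepsilon_i=1-\sum_\ell b_{i,\ell}$. Equilibrium profit $\pi_i(a)=\varepsilon_i\bar v_i$, where $\bar v$ solves $\bar v_j=a_{0,j}+a_{0,j}\sum_i\varepsilon_i\bar v_i+\sum_ia_{i,j}\bar v_i$ ($j\in M$), $\sum_ia_{i,0}\bar v_i=1$. For $i,j\in M$, $\tilde a_{j,i}:=a_{i,j}+\varepsilon_ia_{0,j}$. A walk $(h_1,\dots,h_k)\in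 M^k$ has weight $\prod_{t=1}^{k-1}\tilde a_{h_{t+1},h_t}$. A direct walk from $j$ to $i$ is a walk with $k\ge2$, $h_1=j$, $h_k=i$ and $h_t\ne i$ for $2\le t\le k-1$; a direct walk from $i$ to $i$ is a direct cycle. $D_{j,i}(a)$ is the sum of weights of direct walks from $j$ to $i$ (for $j=i$: of direct cycles around $i$). Assumption 1: $a_0\in\mathbb{R}^M_{++}$, $b_{i,0}>0$ for all $i$, some firm has a positive non-labor requirement. *)

theory Defs
  imports "HOL-Analysis.Analysis"
begin

text \<open>Household is agent 0, firms are M = {1..n}, goods/agents N = {0..n}.
  Sectors are 0..L; sector 0 (labor) is {0}; firm j (1 \<le> j \<le> n) belongs to sector sec j \<in> {1..L}.
  Requirements b i l, consumption shares a0 j, profile a i j (firm i's share on good j).\<close>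

definition firms :: "nat \<Rightarrow> nat set" where
  "firms n = {1..n}"

definition sector :: "nat \<Rightarrow> (nat \<Rightarrow> nat) \<Rightarrow> nat \<Rightarrow> nat set" where
  "sector n sec l = (if l = 0 then {0} else {j \<in> {1..n}. sec j = l})"

text \<open>S_i(b): nonnegative vectors in R^N (functions vanishing outside N) whose sector sums
  equal the requirements.\<close>
definition strat_set :: "nat \<Rightarrow> nat \<Rightarrow> (nat \<Rightarrow> nat) \<Rightarrow> (nat \<Rightarrow> nat \<Rightarrow> real) \<Rightarrow> nat \<Rightarrow> (nat \<Rightarrow> real) set" where
  "strat_set n L sec b i = {x. (\<forall>j. 0 \<le> x j) \<and> (\<forall>j. n < j \<longrightarrow> x j = 0) \<and>
      (\<forall>l\<in>{0..L}. (\<Sum>j\<in>sector n sec l. x j) = b i l)}"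

definition admissible :: "nat \<Rightarrow> nat \<Rightarrow> (nat \<Rightarrow> nat) \<Rightarrow> (nat \<Rightarrow> nat \<Rightarrow> real) \<Rightarrow> (nat \<Rightarrow> nat \<Rightarrow> real) \<Rightarrow> bool" where
  "admissible n L sec b a \<longleftrightarrow> (\<forall>i\<in>firms n. a i \<in> strat_set n L sec b i)"

definition eps :: "nat \<Rightarrow> (nat \<Rightarrow> nat \<Rightarrow> real) \<Rightarrow> nat \<Rightarrow> real" where
  "eps L b i = 1 - (\<Sum>l\<in>{0..L}. b i l)"

text \<open>atil ... j i is the paper's \<tilde>a_{j,i} = a_{i,j} + eps_i a_{0,j}.\<close>
definition atil :: "nat \<Rightarrow> (nat \<Rightarrow> nat \<Rightarrow> real) \<Rightarrow> (nat \<Rightarrow> real) \<Rightarrow> (nat \<Rightarrow> nat \<Rightarrow> real) \<Rightarrow> nat \<Rightarrow> nat \<Rightarrow> real" where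
  "atil L b a0 a j i = a i j + eps L b i * a0 j"

definition walk_weight :: "nat \<Rightarrow> (nat \<Rightarrow> nat \<Rightarrow> real) \<Rightarrow> (nat \<Rightarrow> real) \<Rightarrow> (nat \<Rightarrow> nat \<Rightarrow> real) \<Rightarrow> nat list \<Rightarrow> real" where
  "walk_weight L b a0 a h = (\<Prod>t<length h - 1. atil L b a0 a (h ! (t+1)) (h ! t))"

text \<open>Direct walks (h_1,...,h_k) in M^k from j to i with k \<ge> 2 (0-based list indices here).\<close>
definition direct_walks :: "nat \<Rightarrow> nat \<Rightarrow> nat \<Rightarrow> nat \<Rightarrow> nat list set" where
  "direct_walks n j i k = {h. length h = k \<and> 2 \<le> k \<and> set h \<subseteq> firms n \<and> hd h = j \<and> last h = i \<and>
      (\<forall>t. 1 \<le> t \<and> t < k - 1 \<longrightarrow> h ! t \<noteq> i)}"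

definition Dw :: "nat \<Rightarrow> nat \<Rightarrow> (nat \<Rightarrow> nat \<Rightarrow> real) \<Rightarrow> (nat \<Rightarrow> real) \<Rightarrow> (nat \<Rightarrow> nat \<Rightarrow> real) \<Rightarrow> nat \<Rightarrow> nat \<Rightarrow> real" where
  "Dw n L b a0 a j i = (\<Sum>k. \<Sum>h\<in>direct_walks n j i (k+2). walk_weight L b a0 a h)"

definition eq_system :: "nat \<Rightarrow> nat \<Rightarrow> (nat \<Rightarrow> nat \<Rightarrow> real) \<Rightarrow> (nat \<Rightarrow> real) \<Rightarrow> (nat \<Rightarrow> nat \<Rightarrow> real) \<Rightarrow> (nat \<Rightarrow> real) \<Rightarrow> bool" where
  "eq_system n L b a0 a v \<longleftrightarrow>
     (\<forall>j\<in>firms n. v j = a0 j + a0 j * (\<Sum>i\<in>firms n. eps L b i * v i) + (\<Sum>i\<in>firms n. a i j * v i)) \<and>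
     (\<Sum>i\<in>firms n. a i 0 * v i) = 1 \<and> (\<forall>j. j \<notin> firms n \<longrightarrow> v j = 0)"

definition vbar :: "nat \<Rightarrow> nat \<Rightarrow> (nat \<Rightarrow> nat \<Rightarrow> real) \<Rightarrow> (nat \<Rightarrow> real) \<Rightarrow> (nat \<Rightarrow> nat \<Rightarrow> real) \<Rightarrow> nat \<Rightarrow> real" where
  "vbar n L b a0 a = (THE v. eq_system n L b a0 a v)"

definition profit :: "nat \<Rightarrow> nat \<Rightarrow> (nat \<Rightarrow> nat \<Rightarrow> real) \<Rightarrow> (nat \<Rightarrow> real) \<Rightarrow> (nat \<Rightarrow> nat \<Rightarrow> real) \<Rightarrow> nat \<Rightarrow> real" where
  "profit n L b a0 a i = eps L b i * vbar n L b a0 a i"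

definition quasiconcave_on :: "(nat \<Rightarrow> real) set \<Rightarrow> ((nat \<Rightarrow> real) \<Rightarrow> real) \<Rightarrow> bool" where
  "quasiconcave_on S f \<longleftrightarrow> (\<forall>x\<in>S. \<forall>y\<in>S. \<forall>t\<in>{0..1}.
      min (f x) (f y) \<le> f (\<lambda>j. t * x j + (1 - t) * y j))"

end

theory Submission
  imports Defs
begin


definition WS :: "nat \<Rightarrow> nat \<Rightarrow> (nat \<Rightarrow> nat \<Rightarrow> real) \<Rightarrow> (nat \<Rightarrow> real) \<Rightarrow> (nat \<Rightarrow> nat \<Rightarrow> real) \<Rightarrow> nat \<Rightarrow> nat \<Rightarrow> nat \<Rightarrow> real" where
  "WS n L b a0 a i k j = (\<Sum>h\<in>direct_walks n j i (k+2). walk_weight L b a0 a h)"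

lemma Dw_WS: "Dw n L b a0 a j i = (\<Sum>k. WS n L b a0 a i k j)"
  by (simp add: Dw_def WS_def)

lemma walk_weight_Cons:
  assumes "h \<noteq> []"
  shows "walk_weight L b a0 a (j#h) = atil L b a0 a (hd h) j * walk_weight L b a0 a h"
proof -
  obtain m where m: "length h = Suc m" using assms by (cases h) auto
  have "walk_weight L b a0 a (j#h) = (\<Prod>t<Suc m. atil L b a0 a ((j#h) ! (t+1)) ((j#h) ! t))"
    by (simp add: walk_weight_def m)
  also have "\<dots> = atil L b a0 a (h!0) j * (\<Prod>t<m. atil L b a0 a (h ! (t+1)) (h ! t))"
    by (subst prod.lessThan_Suc_shift) simp
  also have "\<dots> = atil L b a0 a (hd h) j * walk_weight L b a0 a h"
    using assms by (simp add: walk_weight_def m hd_conv_nth)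
  finally show ?thesis .
qed

lemma dw_finite: "finite (direct_walks n j i k)"
proof -
  have "direct_walks n j i k \<subseteq> {xs. set xs \<subseteq> firms n \<and> length xs = k}"
    by (auto simp: direct_walks_def)
  moreover have "finite {xs. set xs \<subseteq> firms n \<and> length xs = k}"
    by (rule finite_lists_length_eq) (simp add: firms_def)
  ultimately show ?thesis by (rule finite_subset)
qed

lemma dw_two:
  assumes "j \<in> firms n" "i \<in> firms n"
  shows "direct_walks n j i 2 = {[j,i]}"
proof
  show "direct_walks n j i 2 \<subseteq> {[j, i]}"
  proof
    fix h assume h: "h \<in> direct_walks n j i 2"
    then have "length h = 2" "hd h = j" "last h = i" by (auto simp: direct_walks_def)
    then show "h \<in> {[j,i]}"
      by (cases h; cases "tl h"; auto)
  qed
  show "{[j, i]} \<subseteq> direct_walks n j i 2"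
    using assms by (auto simp: direct_walks_def)
qed

lemma dw_Suc:
  assumes "j \<in> firms n" "2 \<le> k"
  shows "direct_walks n j i (Suc k) = (Cons j) ` (\<Union>m\<in>firms n - {i}. direct_walks n m i k)"
proof
  show "direct_walks n j i (Suc k) \<subseteq> (Cons j) ` (\<Union>m\<in>firms n - {i}. direct_walks n m i k)"
  proof
    fix h assume h: "h \<in> direct_walks n j i (Suc k)"
    then obtain x h' where hh: "h = x # h'" by (cases h) (auto simp: direct_walks_def)
    have len: "length h' = k" using h hh by (auto simp: direct_walks_def)
    have x: "x = j" using h hh by (auto simp: direct_walks_def)
    have h'ne: "h' \<noteq> []" using len assms by auto
    have c: "\<forall>t. 1 \<le> t \<and> t < Suc k - 1 \<longrightarrow> h ! t \<noteq> i" using h by (auto simp: direct_walks_def)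
    have "h ! 1 \<noteq> i" using c assms by auto
    then have hd1: "hd h' \<noteq> i" using hh h'ne by (simp add: hd_conv_nth)
    have sub: "set h' \<subseteq> firms n" using h hh by (auto simp: direct_walks_def)
    have hdF: "hd h' \<in> firms n" using sub h'ne hd_in_set by blast
    have lst: "last h' = i" using h hh h'ne by (auto simp: direct_walks_def)
    have c': "\<forall>t. 1 \<le> t \<and> t < k - 1 \<longrightarrow> h' ! t \<noteq> i"
    proof (intro allI impI)
      fix t assume t: "1 \<le> t \<and> t < k - 1"
      then have "1 \<le> Suc t \<and> Suc t < Suc k - 1" by linarith
      then have "h ! Suc t \<noteq> i" using c by blast
      then show "h' ! t \<noteq> i" using hh by simp
    qed
    have "h' \<in> direct_walks n (hd h') i k"
      using len assms sub lst c' by (auto simp: direct_walks_def)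
    then show "h \<in> (Cons j) ` (\<Union>m\<in>firms n - {i}. direct_walks n m i k)"
      using hh x hd1 hdF by blast
  qed
  show "(Cons j) ` (\<Union>m\<in>firms n - {i}. direct_walks n m i k) \<subseteq> direct_walks n j i (Suc k)"
  proof
    fix h assume "h \<in> (Cons j) ` (\<Union>m\<in>firms n - {i}. direct_walks n m i k)"
    then obtain m h' where hh: "h = j # h'" and m: "m \<in> firms n - {i}" and h': "h' \<in> direct_walks n m i k"
      by blast
    have len: "length h' = k" and sub: "set h' \<subseteq> firms n" and hd': "hd h' = m" and lst: "last h' = i"
      and c: "\<forall>t. 1 \<le> t \<and> t < k - 1 \<longrightarrow> h' ! t \<noteq> i"
      using h' by (auto simp: direct_walks_def)
    have h'ne: "h' \<noteq> []" using len assms by auto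
    have c2: "\<forall>t. 1 \<le> t \<and> t < Suc k - 1 \<longrightarrow> h ! t \<noteq> i"
    proof (intro allI impI)
      fix t assume t: "1 \<le> t \<and> t < Suc k - 1"
      then obtain s where s: "t = Suc s" by (cases t) auto
      show "h ! t \<noteq> i"
      proof (cases s)
        case 0
        then show ?thesis using hh s hd' m h'ne by (simp add: hd_conv_nth)
      next
        case (Suc s')
        then show ?thesis using hh s c t by auto
      qed
    qed
    show "h \<in> direct_walks n j i (Suc k)"
      using len sub lst c2 hh assms h'ne by (auto simp: direct_walks_def)
  qed
qed

lemma WS_0:
  assumes "j \<in> firms n" "i \<in> firms n"
  shows "WS n L b a0 a i 0 j = atil L b a0 a i j"
proof -
  have "direct_walks n j i (0+2) = {[j,i]}" using dw_two[OF assms, unfolded numeral_2_eq_2] by simp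
  then show ?thesis by (simp add: WS_def walk_weight_def)
qed

lemma WS_Suc:
  assumes "j \<in> firms n"
  shows "WS n L b a0 a i (Suc k) j = (\<Sum>m\<in>firms n - {i}. atil L b a0 a m j * WS n L b a0 a i k m)"
proof -
  let ?U = "\<Union>m\<in>firms n - {i}. direct_walks n m i (k+2)"
  have "WS n L b a0 a i (Suc k) j = (\<Sum>h\<in>(Cons j) ` ?U. walk_weight L b a0 a h)"
    unfolding WS_def using dw_Suc[OF assms, of "k+2" i] by simp
  also have "\<dots> = (\<Sum>h\<in>?U. walk_weight L b a0 a (j#h))"
    by (subst sum.reindex) (auto simp: inj_on_def)
  also have "\<dots> = (\<Sum>m\<in>firms n - {i}. \<Sum>h\<in>direct_walks n m i (k+2). walk_weight L b a0 a (j#h))"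
    by (rule sum.UNION_disjoint) (auto simp: dw_finite firms_def, auto simp: direct_walks_def)
  also have "\<dots> = (\<Sum>m\<in>firms n - {i}. \<Sum>h\<in>direct_walks n m i (k+2). atil L b a0 a m j * walk_weight L b a0 a h)"
  proof (rule sum.cong[OF refl], rule sum.cong[OF refl])
    fix m h assume "h \<in> direct_walks n m i (k+2)"
    then have "h \<noteq> []" "hd h = m" by (auto simp: direct_walks_def)
    then show "walk_weight L b a0 a (j#h) = atil L b a0 a m j * walk_weight L b a0 a h"
      using walk_weight_Cons by metis
  qed
  also have "\<dots> = (\<Sum>m\<in>firms n - {i}. atil L b a0 a m j * WS n L b a0 a i k m)"
    by (simp add: WS_def sum_distrib_left)
  finally show ?thesis .
qed




locale econ =
  fixes n L :: nat and sec :: "nat \<Rightarrow> nat" and b :: "nat \<Rightarrow> nat \<Rightarrow> real" and a0 :: "nat \<Rightarrow> real"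
  assumes sec: "\<forall>j\<in>firms n. sec j \<in> {1..L}"
    and a0_pos: "\<forall>j\<in>firms n. 0 < a0 j"
    and a0_sum: "(\<Sum>j\<in>firms n. a0 j) = 1"
    and b_nonneg: "\<forall>k\<in>firms n. \<forall>l\<in>{0..L}. 0 \<le> b k l"
    and b_sum: "\<forall>k\<in>firms n. (\<Sum>l\<in>{0..L}. b k l) \<le> 1"
    and b_labor: "\<forall>k\<in>firms n. 0 < b k 0"
begin

lemma finF: "finite (firms n)" by (simp add: firms_def)

lemma strat_sum:
  assumes m: "m \<in> firms n" and x: "x \<in> strat_set n L sec b m"
  shows "x 0 = b m 0" "(\<Sum>j\<in>firms n. x j) = (\<Sum>l\<in>{1..L}. b m l)" "\<And>j. 0 \<le> x j"
proof -
  have S: "\<forall>l\<in>{0..L}. (\<Sum>j\<in>sector n sec l. x j) = b m l" and nn: "\<forall>j. 0 \<le> x j"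
    using x by (auto simp: strat_set_def)
  show "x 0 = b m 0" using S[rule_format, of 0] by (simp add: sector_def)
  show "\<And>j. 0 \<le> x j" using nn by auto
  have "(\<Sum>j\<in>firms n. x j) = (\<Sum>l\<in>{1..L}. \<Sum>j\<in>{j. j \<in> firms n \<and> sec j = l}. x j)"
    by (rule sum.group[symmetric]) (use sec finF in auto)
  also have "\<dots> = (\<Sum>l\<in>{1..L}. b m l)"
  proof (rule sum.cong[OF refl])
    fix l assume l: "l \<in> {1..L}"
    then have "{j. j \<in> firms n \<and> sec j = l} = sector n sec l" by (auto simp: sector_def firms_def)
    then show "(\<Sum>j\<in>{j. j \<in> firms n \<and> sec j = l}. x j) = b m l" using S l by auto
  qed
  finally show "(\<Sum>j\<in>firms n. x j) = (\<Sum>l\<in>{1..L}. b m l)" .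
qed

lemma bsum_split: "(\<Sum>l\<in>{0..L}. b m l) = b m 0 + (\<Sum>l\<in>{1..L}. b m l)"
  by (simp add: sum.atLeast_Suc_atMost)

lemma eps_nonneg: "m \<in> firms n \<Longrightarrow> 0 \<le> eps L b m"
  using b_sum by (auto simp: eps_def)

lemma b0_le: "m \<in> firms n \<Longrightarrow> b m 0 \<le> 1"
proof -
  assume m: "m \<in> firms n"
  have "0 \<le> (\<Sum>l\<in>{1..L}. b m l)" using b_nonneg m by (auto intro: sum_nonneg)
  then show ?thesis using b_sum m bsum_split[of m] by auto
qed

lemma adm_strat: "admissible n L sec b a \<Longrightarrow> m \<in> firms n \<Longrightarrow> a m \<in> strat_set n L sec b m"
  by (simp add: admissible_def)

lemma atil_nonneg:
  assumes "admissible n L sec b a" "m \<in> firms n" "j \<in> firms n"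
  shows "0 \<le> atil L b a0 a j m"
proof -
  have "0 \<le> a m j" using strat_sum(3)[OF assms(2) adm_strat[OF assms(1,2)]] .
  moreover have "0 \<le> eps L b m * a0 j" using eps_nonneg[OF assms(2)] a0_pos assms(3) by auto
  ultimately show ?thesis by (simp add: atil_def)
qed

lemma colsum:
  assumes "admissible n L sec b a" "m \<in> firms n"
  shows "(\<Sum>j\<in>firms n. atil L b a0 a j m) = 1 - b m 0"
proof -
  have "(\<Sum>j\<in>firms n. atil L b a0 a j m) = (\<Sum>j\<in>firms n. a m j) + eps L b m * (\<Sum>j\<in>firms n. a0 j)"
    by (simp add: atil_def sum.distrib sum_distrib_left)
  also have "\<dots> = (\<Sum>l\<in>{1..L}. b m l) + eps L b m"
    using strat_sum(2)[OF assms(2) adm_strat[OF assms]] a0_sum by simp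
  also have "\<dots> = 1 - b m 0" by (simp add: eps_def bsum_split)
  finally show ?thesis .
qed

lemma colsum_lt: "admissible n L sec b a \<Longrightarrow> m \<in> firms n \<Longrightarrow> (\<Sum>j\<in>firms n. atil L b a0 a j m) < 1"
  using colsum b_labor by auto

context
  fixes a i
  assumes adm: "admissible n L sec b a" and i: "i \<in> firms n"
begin

lemma WS_nonneg: "j \<in> firms n \<Longrightarrow> 0 \<le> WS n L b a0 a i k j"
proof (induction k arbitrary: j)
  case 0
  then show ?case using WS_0[OF 0 i] atil_nonneg[OF adm 0 i] by simp
next
  case (Suc k)
  show ?case unfolding WS_Suc[OF Suc.prems]
    by (rule sum_nonneg) (use Suc atil_nonneg[OF adm Suc.prems] in auto)
qed

lemma WS_partial: "\<forall>j\<in>firms n. (\<Sum>k<K. WS n L b a0 a i k j) \<le> 1 - b j 0"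
proof (induction K)
  case 0
  then show ?case using b0_le by auto
next
  case (Suc K)
  show ?case
  proof
    fix j assume j: "j \<in> firms n"
    let ?w = "atil L b a0 a"
    have "(\<Sum>k<Suc K. WS n L b a0 a i k j) = WS n L b a0 a i 0 j + (\<Sum>k<K. WS n L b a0 a i (Suc k) j)"
      by (rule sum.lessThan_Suc_shift)
    also have "\<dots> = ?w i j + (\<Sum>k<K. \<Sum>m\<in>firms n - {i}. ?w m j * WS n L b a0 a i k m)"
      using WS_0[OF j i] WS_Suc[OF j] by simp
    also have "\<dots> = ?w i j + (\<Sum>m\<in>firms n - {i}. ?w m j * (\<Sum>k<K. WS n L b a0 a i k m))"
      by (simp add: sum.swap[of _ "{..<K}"] sum_distrib_left)
    also have "\<dots> \<le> ?w i j + (\<Sum>m\<in>firms n - {i}. ?w m j * 1)"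
    proof -
      have "(\<Sum>m\<in>firms n - {i}. ?w m j * (\<Sum>k<K. WS n L b a0 a i k m)) \<le> (\<Sum>m\<in>firms n - {i}. ?w m j * 1)"
      proof (rule sum_mono)
        fix m assume m: "m \<in> firms n - {i}"
        have "(\<Sum>k<K. WS n L b a0 a i k m) \<le> 1" using Suc.IH m b_labor by force
        then show "?w m j * (\<Sum>k<K. WS n L b a0 a i k m) \<le> ?w m j * 1"
          using atil_nonneg[OF adm j] m by (intro mult_left_mono) auto
      qed
      then show ?thesis by simp
    qed
    also have "\<dots> = (\<Sum>m\<in>firms n. ?w m j)"
      using sum.remove[OF finF i, of "\<lambda>m. ?w m j"] by simp
    also have "\<dots> = 1 - b j 0" using colsum[OF adm j] .
    finally show "(\<Sum>k<Suc K. WS n L b a0 a i k j) \<le> 1 - b j 0" .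
  qed
qed

lemma WS_summable: "j \<in> firms n \<Longrightarrow> summable (\<lambda>k. WS n L b a0 a i k j)"
  by (rule summableI_nonneg_bounded[where x="1 - b j 0"]) (use WS_nonneg WS_partial in auto)

lemma Dw_le: "j \<in> firms n \<Longrightarrow> Dw n L b a0 a j i \<le> 1 - b j 0"
  unfolding Dw_WS by (rule suminf_le_const) (use WS_summable WS_partial in auto)

lemma Dw_nonneg: "j \<in> firms n \<Longrightarrow> 0 \<le> Dw n L b a0 a j i"
  unfolding Dw_WS by (rule suminf_nonneg) (use WS_summable WS_nonneg in auto)

lemma Dw_rec:
  assumes j: "j \<in> firms n"
  shows "Dw n L b a0 a j i = atil L b a0 a i j + (\<Sum>m\<in>firms n - {i}. atil L b a0 a m j * Dw n L b a0 a m i)"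
proof -
  let ?f = "\<lambda>k. WS n L b a0 a i k j"
  have "(\<Sum>k. ?f (Suc k)) = (\<Sum>k. \<Sum>m\<in>firms n - {i}. atil L b a0 a m j * WS n L b a0 a i k m)"
    using WS_Suc[OF j] by simp
  also have "\<dots> = (\<Sum>m\<in>firms n - {i}. \<Sum>k. atil L b a0 a m j * WS n L b a0 a i k m)"
    by (rule suminf_sum) (use WS_summable in \<open>auto intro: summable_mult\<close>)
  also have "\<dots> = (\<Sum>m\<in>firms n - {i}. atil L b a0 a m j * Dw n L b a0 a m i)"
    by (rule sum.cong[OF refl]) (use WS_summable in \<open>auto simp: Dw_WS suminf_mult\<close>)
  finally have "(\<Sum>k. ?f (Suc k)) = (\<Sum>m\<in>firms n - {i}. atil L b a0 a m j * Dw n L b a0 a m i)" .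
  moreover have "(\<Sum>k. ?f (Suc k)) = suminf ?f - ?f 0" by (rule suminf_split_head[OF WS_summable[OF j]])
  ultimately show ?thesis using WS_0[OF j i] by (simp add: Dw_WS)
qed

lemma Dii_lt: "Dw n L b a0 a i i < 1"
  using Dw_le[OF i] b_labor i by force

end

lemma Dw_indep:
  assumes i: "i \<in> firms n" and same: "\<forall>h\<in>firms n - {i}. a' h = a h"
  shows "\<forall>j\<in>firms n - {i}. Dw n L b a0 a' j i = Dw n L b a0 a j i"
proof -
  have "\<forall>j\<in>firms n - {i}. WS n L b a0 a' i k j = WS n L b a0 a i k j" for k
  proof (induction k)
    case 0
    then show ?case using WS_0 i same by (auto simp: atil_def)
  next
    case (Suc k)
    show ?case
    proof
      fix j assume j: "j \<in> firms n - {i}"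
      show "WS n L b a0 a' i (Suc k) j = WS n L b a0 a i (Suc k) j"
        using j Suc.IH same WS_Suc[of j n L b a0 a' i k] WS_Suc[of j n L b a0 a i k]
        by (auto simp: atil_def intro!: sum.cong)
    qed
  qed
  then show ?thesis by (simp add: Dw_WS)
qed

end



primrec xit :: "(nat \<Rightarrow> nat \<Rightarrow> real) \<Rightarrow> nat set \<Rightarrow> (nat \<Rightarrow> real) \<Rightarrow> nat \<Rightarrow> nat \<Rightarrow> real" where
  "xit w F c 0 = (\<lambda>j. 0)"
| "xit w F c (Suc K) = (\<lambda>j. if j \<in> F then c j + (\<Sum>m\<in>F. w j m * xit w F c K m) else 0)"

context econ begin

context
  fixes a i
  assumes adm: "admissible n L sec b a" and i: "i \<in> firms n"
begin

lemma swapcol: "(\<Sum>j\<in>A. \<Sum>m\<in>A. f j m * (x m::real)) = (\<Sum>m\<in>A. (\<Sum>j\<in>A. f j m) * x m)"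
  by (subst sum.swap) (simp add: sum_distrib_right)

definition "beta = Min ((\<lambda>m. b m 0) ` firms n)"
abbreviation "w \<equiv> atil L b a0 a"
abbreviation "xx \<equiv> xit w (firms n) a0"

lemma beta: "0 < beta" "\<And>m. m \<in> firms n \<Longrightarrow> beta \<le> b m 0" "beta \<le> 1"
proof -
  have ne: "firms n \<noteq> {}" using i by auto
  show "0 < beta" unfolding beta_def using finF ne b_labor by (subst Min_gr_iff) auto
  show "\<And>m. m \<in> firms n \<Longrightarrow> beta \<le> b m 0" unfolding beta_def using finF by auto
  then show "beta \<le> 1" using b0_le i by (meson order_trans)
qed

lemma xx_nonneg: "0 \<le> xx K j"
proof (induction K arbitrary: j)
  case 0 then show ?case by simp
next
  case (Suc K)
  have "0 \<le> (\<Sum>m\<in>firms n. w j m * xx K m)" if "j \<in> firms n"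
    by (rule sum_nonneg) (use atil_nonneg[OF adm] Suc that in auto)
  then show ?case using a0_pos by auto
qed

lemma xx_mono: "xx K j \<le> xx (Suc K) j"
proof (induction K arbitrary: j)
  case 0 then show ?case using xx_nonneg[of "Suc 0" j] by simp
next
  case (Suc K)
  have "(\<Sum>m\<in>firms n. w j m * xx K m) \<le> (\<Sum>m\<in>firms n. w j m * xx (Suc K) m)" if "j \<in> firms n"
    by (rule sum_mono, rule mult_left_mono[OF Suc.IH]) (use atil_nonneg[OF adm] that in auto)
  then show ?case by (simp only: xit.simps) auto
qed

lemma xx_sum: "(\<Sum>j\<in>firms n. xx K j) \<le> 1 / beta"
proof (induction K)
  case 0 then show ?case using beta by simp
next
  case (Suc K)
  have "(\<Sum>j\<in>firms n. xx (Suc K) j) = (\<Sum>j\<in>firms n. a0 j + (\<Sum>m\<in>firms n. w j m * xx K m))"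
    by simp
  also have "\<dots> = 1 + (\<Sum>m\<in>firms n. (\<Sum>j\<in>firms n. w j m) * xx K m)"
    by (simp only: sum.distrib a0_sum swapcol)
  also have "\<dots> = 1 + (\<Sum>m\<in>firms n. (1 - b m 0) * xx K m)"
    using colsum[OF adm] by simp
  also have "\<dots> \<le> 1 + (\<Sum>m\<in>firms n. (1 - beta) * xx K m)"
    by (rule add_left_mono, rule sum_mono, rule mult_right_mono) (use beta xx_nonneg in auto)
  also have "\<dots> = 1 + (1 - beta) * (\<Sum>m\<in>firms n. xx K m)" by (simp add: sum_distrib_left)
  also have "\<dots> \<le> 1 + (1 - beta) * (1 / beta)"
    by (rule add_left_mono, rule mult_left_mono) (use beta Suc in auto)
  also have "\<dots> = 1 / beta" using beta by (simp add: field_simps)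
  finally show ?case .
qed

lemma xx_bound: "xx K j \<le> 1 / beta"
proof (cases "j \<in> firms n")
  case True
  have "xx K j \<le> (\<Sum>j\<in>firms n. xx K j)"
    by (rule member_le_sum) (use True xx_nonneg finF in auto)
  then show ?thesis using xx_sum[of K] by linarith
next
  case False
  then have "xx K j = 0" by (cases K) auto
  then show ?thesis using beta by simp
qed

definition "vv j = (SUP K. xx K j)"

lemma xx_lim: "(\<lambda>K. xx K j) \<longlonglongrightarrow> vv j"
  unfolding vv_def
proof (rule LIMSEQ_incseq_SUP)
  show "bdd_above (range (\<lambda>K. xx K j))" using xx_bound by (intro bdd_aboveI2) blast
  show "incseq (\<lambda>K. xx K j)" using xx_mono by (intro incseq_SucI) blast
qed

lemma vv_out: "j \<notin> firms n \<Longrightarrow> vv j = 0"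
proof -
  assume j: "j \<notin> firms n"
  have "\<And>K. xx K j = 0" using j by (case_tac K) auto
  then have "(\<lambda>K. xx K j) \<longlonglongrightarrow> 0" by simp
  then show ?thesis using xx_lim LIMSEQ_unique by blast
qed

lemma vv_fix: "j \<in> firms n \<Longrightarrow> vv j = a0 j + (\<Sum>m\<in>firms n. w j m * vv m)"
proof -
  assume j: "j \<in> firms n"
  have "(\<lambda>K. xx (Suc K) j) \<longlonglongrightarrow> vv j" using xx_lim LIMSEQ_Suc by blast
  moreover have "(\<lambda>K. xx (Suc K) j) = (\<lambda>K. a0 j + (\<Sum>m\<in>firms n. w j m * xx K m))" using j by simp
  moreover have "(\<lambda>K. a0 j + (\<Sum>m\<in>firms n. w j m * xx K m)) \<longlonglongrightarrow> a0 j + (\<Sum>m\<in>firms n. w j m * vv m)"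
    by (intro tendsto_intros xx_lim)
  ultimately show ?thesis using LIMSEQ_unique by metis
qed

lemma vv_nonneg: "0 \<le> vv j"
  using xx_lim xx_nonneg by (meson LIMSEQ_le_const)

lemma fp_iff:
  "j \<in> firms n \<Longrightarrow> (u j = a0 j + a0 j * (\<Sum>m\<in>firms n. eps L b m * u m) + (\<Sum>m\<in>firms n. a m j * u m))
     \<longleftrightarrow> (u j = a0 j + (\<Sum>m\<in>firms n. w j m * u m))"
  by (simp add: atil_def algebra_simps sum.distrib sum_distrib_left)

lemma sum_a0: "(\<Sum>m\<in>firms n. a m 0 * u m) = (\<Sum>m\<in>firms n. b m 0 * u m)"
  using strat_sum(1)[OF _ adm_strat[OF adm]] by (intro sum.cong) auto

lemma vv_sys: "eq_system n L b a0 a vv"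
proof -
  have A: "\<forall>j\<in>firms n. vv j = a0 j + a0 j * (\<Sum>m\<in>firms n. eps L b m * vv m) + (\<Sum>m\<in>firms n. a m j * vv m)"
    using fp_iff vv_fix by blast
  have "(\<Sum>j\<in>firms n. vv j) = (\<Sum>j\<in>firms n. a0 j + (\<Sum>m\<in>firms n. w j m * vv m))"
    using vv_fix by (intro sum.cong) auto
  also have "\<dots> = 1 + (\<Sum>m\<in>firms n. (\<Sum>j\<in>firms n. w j m) * vv m)"
    by (simp only: sum.distrib a0_sum swapcol)
  also have "\<dots> = 1 + (\<Sum>m\<in>firms n. (1 - b m 0) * vv m)"
    using colsum[OF adm] by simp
  also have "\<dots> = 1 + ((\<Sum>m\<in>firms n. vv m) - (\<Sum>m\<in>firms n. b m 0 * vv m))"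
    by (simp only: left_diff_distrib mult_1 sum_subtractf)
  finally have "(\<Sum>m\<in>firms n. b m 0 * vv m) = 1" by simp
  then have B: "(\<Sum>m\<in>firms n. a m 0 * vv m) = 1" using sum_a0 by simp
  show ?thesis unfolding eq_system_def using A B vv_out by blast
qed

lemma sys_unique:
  assumes u: "eq_system n L b a0 a u"
  shows "u = vv"
proof -
  have uf: "\<forall>j\<in>firms n. u j = a0 j + (\<Sum>m\<in>firms n. w j m * u m)"
  proof
    fix j assume j: "j \<in> firms n"
    have "u j = a0 j + a0 j * (\<Sum>m\<in>firms n. eps L b m * u m) + (\<Sum>m\<in>firms n. a m j * u m)"
      using u j unfolding eq_system_def by blast
    then show "u j = a0 j + (\<Sum>m\<in>firms n. w j m * u m)" using fp_iff[OF j] by blast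
  qed
  define d where "d j = u j - vv j" for j
  have dj: "d j = (\<Sum>m\<in>firms n. w j m * d m)" if "j \<in> firms n" for j
  proof -
    have "d j = (\<Sum>m\<in>firms n. w j m * u m) - (\<Sum>m\<in>firms n. w j m * vv m)"
    proof -
      have "u j = a0 j + (\<Sum>m\<in>firms n. w j m * u m)" using uf that by blast
      moreover have "vv j = a0 j + (\<Sum>m\<in>firms n. w j m * vv m)" using vv_fix[OF that] .
      ultimately show ?thesis unfolding d_def by linarith
    qed
    also have "\<dots> = (\<Sum>m\<in>firms n. w j m * d m)"
      by (simp only: sum_subtractf[symmetric] d_def right_diff_distrib)
    finally show ?thesis .
  qed
  have "(\<Sum>j\<in>firms n. \<bar>d j\<bar>) \<le> (\<Sum>j\<in>firms n. \<Sum>m\<in>firms n. w j m * \<bar>d m\<bar>)"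
  proof (rule sum_mono)
    fix j assume j: "j \<in> firms n"
    have "\<bar>d j\<bar> = \<bar>\<Sum>m\<in>firms n. w j m * d m\<bar>" by (rule arg_cong[of _ _ abs, OF dj[OF j]])
    also have "\<dots> \<le> (\<Sum>m\<in>firms n. \<bar>w j m * d m\<bar>)" by (rule sum_abs)
    also have "\<dots> = (\<Sum>m\<in>firms n. w j m * \<bar>d m\<bar>)"
      using atil_nonneg[OF adm _ j] by (intro sum.cong) (auto simp: abs_mult)
    finally show "\<bar>d j\<bar> \<le> (\<Sum>m\<in>firms n. w j m * \<bar>d m\<bar>)" .
  qed
  also have "\<dots> = (\<Sum>m\<in>firms n. (\<Sum>j\<in>firms n. w j m) * \<bar>d m\<bar>)"
    by (rule swapcol)
  also have "\<dots> = (\<Sum>m\<in>firms n. (1 - b m 0) * \<bar>d m\<bar>)"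
    using colsum[OF adm] by simp
  also have "\<dots> = (\<Sum>m\<in>firms n. \<bar>d m\<bar>) - (\<Sum>m\<in>firms n. b m 0 * \<bar>d m\<bar>)"
    by (simp only: left_diff_distrib mult_1 sum_subtractf)
  finally have le: "(\<Sum>m\<in>firms n. b m 0 * \<bar>d m\<bar>) \<le> 0" by simp
  have nn: "\<forall>m\<in>firms n. 0 \<le> b m 0 * \<bar>d m\<bar>" using b_labor by auto
  have "0 \<le> (\<Sum>m\<in>firms n. b m 0 * \<bar>d m\<bar>)" by (rule sum_nonneg) (use nn in auto)
  then have "(\<Sum>m\<in>firms n. b m 0 * \<bar>d m\<bar>) = 0" using le by linarith
  then have "\<forall>m\<in>firms n. b m 0 * \<bar>d m\<bar> = 0"
    using nn by (subst (asm) sum_nonneg_eq_0_iff[OF finF]) auto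
  then have "\<forall>m\<in>firms n. d m = 0"
  proof (intro ballI)
    fix m assume h: "\<forall>m\<in>firms n. b m 0 * \<bar>d m\<bar> = 0" and m: "m \<in> firms n"
    have "b m 0 * \<bar>d m\<bar> = 0" using h m by blast
    moreover have "0 < b m 0" using b_labor m by blast
    ultimately show "d m = 0" by simp
  qed
  moreover have "\<forall>j. j \<notin> firms n \<longrightarrow> u j = 0" using u unfolding eq_system_def by blast
  ultimately show ?thesis
  proof (intro ext)
    fix j
    show "u j = vv j"
    proof (cases "j \<in> firms n")
      case True
      then show ?thesis using \<open>\<forall>m\<in>firms n. d m = 0\<close> unfolding d_def by auto
    next
      case False
      then show ?thesis using vv_out \<open>\<forall>j. j \<notin> firms n \<longrightarrow> u j = 0\<close> by auto
    qed
  qed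
qed

lemma vbar_eq: "vbar n L b a0 a = vv"
  unfolding vbar_def using vv_sys sys_unique by (rule the_equality)

lemma vi_formula:
  "vbar n L b a0 a i * (1 - Dw n L b a0 a i i) = a0 i + (\<Sum>m\<in>firms n - {i}. a0 m * Dw n L b a0 a m i)"
proof -
  let ?F = "firms n - {i}"
  let ?D = "\<lambda>m. Dw n L b a0 a m i"
  have 1: "(\<Sum>m\<in>?F. ?D m * vv m) = (\<Sum>m\<in>?F. ?D m * a0 m) + (\<Sum>m\<in>?F. ?D m * (\<Sum>j\<in>firms n. w m j * vv j))"
    using vv_fix by (simp add: sum.distrib[symmetric] distrib_left)
  have 2: "(\<Sum>m\<in>?F. ?D m * (\<Sum>j\<in>firms n. w m j * vv j)) = (\<Sum>j\<in>firms n. vv j * (\<Sum>m\<in>?F. w m j * ?D m))"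
    unfolding sum_distrib_left by (subst sum.swap) (simp add: mult_ac)
  have 3: "(\<Sum>j\<in>firms n. vv j * (\<Sum>m\<in>?F. w m j * ?D m)) = (\<Sum>j\<in>firms n. vv j * ?D j) - (\<Sum>j\<in>firms n. w i j * vv j)"
  proof -
    have "(\<Sum>j\<in>firms n. vv j * (\<Sum>m\<in>?F. w m j * ?D m)) = (\<Sum>j\<in>firms n. vv j * ?D j - w i j * vv j)"
    proof (rule sum.cong[OF refl])
      fix j assume j: "j \<in> firms n"
      have "(\<Sum>m\<in>?F. w m j * ?D m) = ?D j - w i j" using Dw_rec[OF adm i j] by simp
      then show "vv j * (\<Sum>m\<in>?F. w m j * ?D m) = vv j * ?D j - w i j * vv j"
        by (simp add: right_diff_distrib mult.commute)
    qed
    then show ?thesis by (simp only: sum_subtractf)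
  qed
  have 4: "(\<Sum>j\<in>firms n. vv j * ?D j) = vv i * ?D i + (\<Sum>m\<in>?F. ?D m * vv m)"
    using sum.remove[OF finF i, of "\<lambda>j. vv j * ?D j"] by (simp add: mult_ac)
  have 5: "(\<Sum>j\<in>firms n. w i j * vv j) = vv i - a0 i" using vv_fix[OF i] by simp
  have "vv i * (1 - ?D i) = a0 i + (\<Sum>m\<in>?F. ?D m * a0 m)"
    using 1 2 3 4 5 by (simp add: algebra_simps)
  then show ?thesis by (simp add: vbar_eq mult_ac)
qed

end
end



context econ begin

lemma profit_formula:
  assumes adm: "admissible n L sec b a" and i: "i \<in> firms n"
  shows "profit n L b a0 a i = eps L b i *
          ((a0 i + (\<Sum>j\<in>firms n - {i}. a0 j * Dw n L b a0 a j i)) /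
           (1 - atil L b a0 a i i - (\<Sum>k\<in>firms n - {i}. atil L b a0 a k i * Dw n L b a0 a k i)))"
    and "1 - atil L b a0 a i i - (\<Sum>k\<in>firms n - {i}. atil L b a0 a k i * Dw n L b a0 a k i) > 0"
proof -
  have den: "1 - atil L b a0 a i i - (\<Sum>k\<in>firms n - {i}. atil L b a0 a k i * Dw n L b a0 a k i)
      = 1 - Dw n L b a0 a i i" using Dw_rec[OF adm i i] by simp
  have pos: "0 < 1 - Dw n L b a0 a i i" using Dii_lt[OF adm i] by simp
  then show "1 - atil L b a0 a i i - (\<Sum>k\<in>firms n - {i}. atil L b a0 a k i * Dw n L b a0 a k i) > 0"
    using den by simp
  have "vbar n L b a0 a i = (a0 i + (\<Sum>j\<in>firms n - {i}. a0 j * Dw n L b a0 a j i)) / (1 - Dw n L b a0 a i i)"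
    using vi_formula[OF adm i] pos by (simp add: eq_divide_eq)
  then show "profit n L b a0 a i = eps L b i *
          ((a0 i + (\<Sum>j\<in>firms n - {i}. a0 j * Dw n L b a0 a j i)) /
           (1 - atil L b a0 a i i - (\<Sum>k\<in>firms n - {i}. atil L b a0 a k i * Dw n L b a0 a k i)))"
    using den by (simp add: profit_def)
qed

lemma strat_convex:
  assumes x: "x \<in> strat_set n L sec b i" and y: "y \<in> strat_set n L sec b i" and t: "t \<in> {0..1}"
  shows "(\<lambda>j. t * x j + (1 - t) * y j) \<in> strat_set n L sec b i"
proof -
  have nn: "\<forall>j. 0 \<le> x j" "\<forall>j. 0 \<le> y j" using x y by (auto simp: strat_set_def)
  have "\<forall>j. 0 \<le> t * x j + (1 - t) * y j" using nn t by auto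
  moreover have "\<forall>j. n < j \<longrightarrow> t * x j + (1 - t) * y j = 0" using x y by (auto simp: strat_set_def)
  moreover have "\<forall>l\<in>{0..L}. (\<Sum>j\<in>sector n sec l. t * x j + (1 - t) * y j) = b i l"
  proof
    fix l assume l: "l \<in> {0..L}"
    have "(\<Sum>j\<in>sector n sec l. t * x j + (1 - t) * y j) = t * (\<Sum>j\<in>sector n sec l. x j) + (1 - t) * (\<Sum>j\<in>sector n sec l. y j)"
      by (simp add: sum.distrib sum_distrib_left)
    also have "\<dots> = b i l" using x y l by (auto simp: strat_set_def algebra_simps)
    finally show "(\<Sum>j\<in>sector n sec l. t * x j + (1 - t) * y j) = b i l" .
  qed
  ultimately show ?thesis by (simp add: strat_set_def)
qed

lemma part4:
  assumes adm: "admissible n L sec b a" and i: "i \<in> firms n"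
  shows "continuous_on (strat_set n L sec b i) (\<lambda>x. profit n L b a0 (a(i := x)) i)
     \<and> quasiconcave_on (strat_set n L sec b i) (\<lambda>x. profit n L b a0 (a(i := x)) i)"
proof -
  let ?S = "strat_set n L sec b i"
  let ?F = "firms n - {i}"
  define D where "D k = Dw n L b a0 a k i" for k
  define e where "e = eps L b i"
  define N where "N = a0 i + (\<Sum>j\<in>?F. a0 j * D j)"
  define g where "g x = 1 - (x i + e * a0 i) - (\<Sum>k\<in>?F. (x k + e * a0 k) * D k)" for x :: "nat \<Rightarrow> real"
  have key: "profit n L b a0 (a(i := x)) i = e * (N / g x) \<and> 0 < g x" if x: "x \<in> ?S" for x
  proof -
    have adm': "admissible n L sec b (a(i := x))" using adm x by (auto simp: admissible_def)
    have same: "\<forall>h\<in>firms n - {i}. (a(i := x)) h = a h" by auto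
    have Deq: "\<forall>j\<in>?F. Dw n L b a0 (a(i := x)) j i = D j" unfolding D_def by (rule Dw_indep[OF i same])
    have at: "\<And>k. atil L b a0 (a(i := x)) k i = x k + e * a0 k" by (simp add: atil_def e_def)
    have num: "a0 i + (\<Sum>j\<in>?F. a0 j * Dw n L b a0 (a(i := x)) j i) = N"
      unfolding N_def using Deq by (intro arg_cong[where f="\<lambda>s. a0 i + s"] sum.cong) auto
    have den: "1 - atil L b a0 (a(i := x)) i i - (\<Sum>k\<in>?F. atil L b a0 (a(i := x)) k i * Dw n L b a0 (a(i := x)) k i) = g x"
      unfolding g_def at using Deq by (intro arg_cong[where f="\<lambda>s. 1 - (x i + e * a0 i) - s"] sum.cong) auto
    show ?thesis using profit_formula[OF adm' i] num den by (simp add: e_def)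
  qed
  have cN: "0 \<le> e * N"
  proof -
    have "0 \<le> N" unfolding N_def D_def using a0_pos i Dw_nonneg[OF adm i]
      by (intro add_nonneg_nonneg sum_nonneg mult_nonneg_nonneg) auto
    then show ?thesis using eps_nonneg[OF i] by (simp add: e_def)
  qed
  have coord: "\<And>k. continuous_on ?S (\<lambda>x. x k)"
    by (rule continuous_on_subset[OF continuous_on_product_coordinates]) simp
  have cont: "continuous_on ?S (\<lambda>x. e * (N / g x))"
  proof -
    have cg: "continuous_on ?S g" unfolding g_def by (intro continuous_intros coord)
    have "\<forall>x\<in>?S. g x \<noteq> 0" using key by force
    then have "continuous_on ?S (\<lambda>x. N / g x)" by (intro continuous_on_divide[OF continuous_on_const cg])
    then show ?thesis by (intro continuous_on_mult[OF continuous_on_const])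
  qed
  have qc: "quasiconcave_on ?S (\<lambda>x. e * (N / g x))"
    unfolding quasiconcave_on_def
  proof (intro ballI)
    fix x y t assume x: "x \<in> ?S" and y: "y \<in> ?S" and t: "t \<in> {0..1::real}"
    let ?z = "\<lambda>j. t * x j + (1 - t) * y j"
    have z: "?z \<in> ?S" using strat_convex[OF x y t] .
    have gz: "g ?z = t * g x + (1 - t) * g y"
    proof -
      have "(\<Sum>k\<in>?F. (?z k + e * a0 k) * D k) = (\<Sum>k\<in>?F. t * ((x k + e * a0 k) * D k) + (1 - t) * ((y k + e * a0 k) * D k))"
        by (rule sum.cong[OF refl]) (simp add: algebra_simps)
      also have "\<dots> = t * (\<Sum>k\<in>?F. (x k + e * a0 k) * D k) + (1 - t) * (\<Sum>k\<in>?F. (y k + e * a0 k) * D k)"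
        by (simp only: sum.distrib sum_distrib_left)
      finally have s: "(\<Sum>k\<in>?F. (?z k + e * a0 k) * D k) = t * (\<Sum>k\<in>?F. (x k + e * a0 k) * D k) + (1 - t) * (\<Sum>k\<in>?F. (y k + e * a0 k) * D k)" .
      show ?thesis unfolding g_def s by (simp add: algebra_simps)
    qed
    have gx: "0 < g x" and gy: "0 < g y" and gzp: "0 < g ?z" using key x y z by auto
    have t0: "0 \<le> t" "t \<le> 1" using t by auto
    show "min (e * (N / g x)) (e * (N / g y)) \<le> e * (N / g ?z)"
    proof (cases "g x \<le> g y")
      case True
      have "t * g x \<le> t * g y" using True t0 by (intro mult_left_mono) auto
      then have "g ?z \<le> g y" unfolding gz by (simp add: algebra_simps)
      then have "e * N / g y \<le> e * N / g ?z" using cN gzp by (intro divide_left_mono) auto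
      then show ?thesis by (simp add: min_le_iff_disj)
    next
      case False
      have "(1 - t) * g y \<le> (1 - t) * g x" using False t0 by (intro mult_left_mono) auto
      then have "g ?z \<le> g x" unfolding gz by (simp add: algebra_simps)
      then have "e * N / g x \<le> e * N / g ?z" using cN gzp by (intro divide_left_mono) auto
      then show ?thesis by (simp add: min_le_iff_disj)
    qed
  qed
  have eqf: "\<And>x. x \<in> ?S \<Longrightarrow> profit n L b a0 (a(i := x)) i = e * (N / g x)" using key by blast
  have "continuous_on ?S (\<lambda>x. profit n L b a0 (a(i := x)) i)"
  proof -
    have "continuous_on ?S (\<lambda>x. profit n L b a0 (a(i := x)) i) = continuous_on ?S (\<lambda>x. e * (N / g x))"
      by (rule continuous_on_cong) (simp_all add: eqf)
    then show ?thesis using cont by simp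
  qed
  moreover have "quasiconcave_on ?S (\<lambda>x. profit n L b a0 (a(i := x)) i)"
    using qc unfolding quasiconcave_on_def using strat_convex eqf by simp
  ultimately show ?thesis by blast
qed

end


theorem mainTheorem7:
  fixes n L :: nat and sec :: "nat \<Rightarrow> nat" and b :: "nat \<Rightarrow> nat \<Rightarrow> real"
    and a0 :: "nat \<Rightarrow> real" and a :: "nat \<Rightarrow> nat \<Rightarrow> real" and i :: nat
  assumes sec: "\<forall>j\<in>firms n. sec j \<in> {1..L}"
    and a0_pos: "\<forall>j\<in>firms n. 0 < a0 j"
    and a0_sum: "(\<Sum>j\<in>firms n. a0 j) = 1"
    and b_nonneg: "\<forall>k\<in>firms n. \<forall>l\<in>{0..L}. 0 \<le> b k l"
    and b_sum: "\<forall>k\<in>firms n. (\<Sum>l\<in>{0..L}. b k l) \<le> 1"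
    and b_labor: "\<forall>k\<in>firms n. 0 < b k 0"
    and b_some: "\<exists>k\<in>firms n. \<exists>l\<in>{1..L}. 0 < b k l"
    and i: "i \<in> firms n"
    and adm: "admissible n L sec b a"
  shows
    "(\<forall>a'. admissible n L sec b a' \<and> (\<forall>h\<in>firms n - {i}. a' h = a h) \<longrightarrow>
        (\<forall>j\<in>firms n - {i}. Dw n L b a0 a' j i = Dw n L b a0 a j i))
     \<and> Dw n L b a0 a i i = atil L b a0 a i i + (\<Sum>k\<in>firms n - {i}. atil L b a0 a k i * Dw n L b a0 a k i)
     \<and> Dw n L b a0 a i i < 1
     \<and> profit n L b a0 a i = eps L b i *
          ((a0 i + (\<Sum>j\<in>firms n - {i}. a0 j * Dw n L b a0 a j i)) /
           (1 - atil L b a0 a i i - (\<Sum>k\<in>firms n - {i}. atil L b a0 a k i * Dw n L b a0 a k i)))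
     \<and> continuous_on (strat_set n L sec b i) (\<lambda>x. profit n L b a0 (a(i := x)) i)
     \<and> quasiconcave_on (strat_set n L sec b i) (\<lambda>x. profit n L b a0 (a(i := x)) i)"
proof -
  interpret econ n L sec b a0
    by unfold_locales (use sec a0_pos a0_sum b_nonneg b_sum b_labor in auto)
  show ?thesis
    using Dw_indep[OF i] Dw_rec[OF adm i i] Dii_lt[OF adm i] profit_formula(1)[OF adm i] part4[OF adm i]
    by blast
qed

end
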